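(* Let $\ell\in\mathbb{N}$ be fixed. Let $G\in\mathcal{G}_{k,n,p}$ and $v\neq w\in V(G)$, and let $X=X_0,X_1,\dots$ be a simple random walk on $G$ starting at $w$. Then \[ H_{wv}=\ell+H_{\mu_\ell v}-\frac{2|E(G)|}{d(v)}\sum_{i=1}^{\ell-1}\mathbb{P}_w[X_i=v]\pm\mathcal{O}\!\left(\frac1{pn}\right). \]
   Context: Fix an integer $k\ge2$ and let $p=p(n)$ satisfy $\frac{\log n}{n^{(k-1)/k}}\le p\le 1-\Omega(\frac{\log^4 n}{n})$. $\mathcal{G}_{k,n,p}$ denotes the set of graphs $G$ on $n$ vertices satisfying: (i) $G$ is not bipartite; (ii) $\operatorname{diam}(G)\le k$; (iii) every vertex has degree $d(v)=pn\pm\mathcal{O}(\sqrt{pn\log n})$; (iv) $2|E(G)|=pn^2\pm\mathcal{O}(\sqrt{pn^2\log n})$; (v) $|N(v)\cap N(w)|=p^2n\pm\mathcal{O}(\max\{\sqrt{p^2n\log n},\log n\})$ for all $v\ne w$; (vi) the unit eigenvector $\phi$ of the largest adjacency eigenvalue has entries $\phi_i=\frac1{\sqrt n}\pm\mathcal{O}(\frac{\log^{3/2}n}{\sqrt p\,n\log(pn)})$; (vii) $\lambda_1=(1+o(1))pn$; (viii) $\max\{|\lambda_2|,|\lambda_n|\}=\mathcal{O}(\sqrt{pn})$, where $\lambda_1\ge\dots\ge\lambda_n$ are the adjacency eigenvalues. Asymptotic notation is as $n\to\infty$ with constants independent of $n$. $\mathbb{P}_w[\cdot]=\mathbb{P}[\cdot\mid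 X_0=w]$; $\mu_\ell(x)=\mathbb{P}_w[X_\ell=x]$; $H_{uv}$ is the expected first hitting time of $v$ from $u$ ($H_{vv}=0$) and $H_{\mu_\ell v}=\sum_u\mu_\ell(u)H_{uv}$. *)

theory Defs
  imports Complex_Main "Jordan_Normal_Form.Char_Poly"
begin

definition simple_graph :: "nat \<Rightarrow> (nat \<Rightarrow> nat \<Rightarrow> bool) \<Rightarrow> bool" where
  "simple_graph n E \<longleftrightarrow> (\<forall>u x. E u x \<longrightarrow> u < n \<and> x < n \<and> u \<noteq> x \<and> E x u)"

definition deg :: "nat \<Rightarrow> (nat \<Rightarrow> nat \<Rightarrow> bool) \<Rightarrow> nat \<Rightarrow> nat" where
  "deg n E v = card {u. u < n \<and> E v u}"

definition num_edges :: "nat \<Rightarrow> (nat \<Rightarrow> nat \<Rightarrow> bool) \<Rightarrow> nat" where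
  "num_edges n E = card {{u, x} | u x. u < n \<and> x < n \<and> E u x}"

definition codeg :: "nat \<Rightarrow> (nat \<Rightarrow> nat \<Rightarrow> bool) \<Rightarrow> nat \<Rightarrow> nat \<Rightarrow> nat" where
  "codeg n E v w = card {u. u < n \<and> E v u \<and> E w u}"

definition bipartite :: "nat \<Rightarrow> (nat \<Rightarrow> nat \<Rightarrow> bool) \<Rightarrow> bool" where
  "bipartite n E \<longleftrightarrow> (\<exists>side :: nat \<Rightarrow> bool. \<forall>u x. u < n \<longrightarrow> x < n \<longrightarrow> E u x \<longrightarrow> side u \<noteq> side x)"

definition has_walk :: "(nat \<Rightarrow> nat \<Rightarrow> bool) \<Rightarrow> nat \<Rightarrow> nat \<Rightarrow> nat \<Rightarrow> bool" where
  "has_walk E m u v \<longleftrightarrow> (\<exists>f :: nat \<Rightarrow> nat. f 0 = u \<and> f m = v \<and> (\<forall>i<m. E (f i) (f (Suc i))))"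

definition diam_le :: "nat \<Rightarrow> (nat \<Rightarrow> nat \<Rightarrow> bool) \<Rightarrow> nat \<Rightarrow> bool" where
  "diam_le n E k \<longleftrightarrow> (\<forall>u v. u < n \<longrightarrow> v < n \<longrightarrow> (\<exists>m\<le>k. has_walk E m u v))"

definition adj_mat :: "nat \<Rightarrow> (nat \<Rightarrow> nat \<Rightarrow> bool) \<Rightarrow> real mat" where
  "adj_mat n E = mat n n (\<lambda>(i, j). if E i j then 1 else 0)"

text \<open>lams is the list of adjacency eigenvalues (with multiplicity) in non-increasing order
  lambda_1 \<ge> ... \<ge> lambda_n.\<close>
definition adj_eigenvalues :: "nat \<Rightarrow> (nat \<Rightarrow> nat \<Rightarrow> bool) \<Rightarrow> real list \<Rightarrow> bool" where
  "adj_eigenvalues n E lams \<longleftrightarrow> length lams = n \<and> sorted (rev lams) \<and>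
     char_poly (adj_mat n E) = (\<Prod>a\<leftarrow>lams. [:- a, 1:])"

definition trans :: "nat \<Rightarrow> (nat \<Rightarrow> nat \<Rightarrow> bool) \<Rightarrow> nat \<Rightarrow> nat \<Rightarrow> real" where
  "trans n E u x = (if E u x then 1 / real (deg n E u) else 0)"

text \<open>walk_dist n E w t x = P_w[X_t = x], i.e. mu_t(x).\<close>
fun walk_dist :: "nat \<Rightarrow> (nat \<Rightarrow> nat \<Rightarrow> bool) \<Rightarrow> nat \<Rightarrow> nat \<Rightarrow> nat \<Rightarrow> real" where
  "walk_dist n E w 0 x = (if x = w then 1 else 0)"
| "walk_dist n E w (Suc t) y = (\<Sum>x<n. walk_dist n E w t x * trans n E x y)"

text \<open>surv n E u v t x = P_u[X_t = x and X_s \<noteq> v for all s \<le> t].\<close>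
fun surv :: "nat \<Rightarrow> (nat \<Rightarrow> nat \<Rightarrow> bool) \<Rightarrow> nat \<Rightarrow> nat \<Rightarrow> nat \<Rightarrow> nat \<Rightarrow> real" where
  "surv n E u v 0 x = (if x = u \<and> u \<noteq> v then 1 else 0)"
| "surv n E u v (Suc t) y = (if y = v then 0 else (\<Sum>x<n. surv n E u v t x * trans n E x y))"

text \<open>Expected first hitting time H_{uv} = E_u[tau_v] = sum_{t \<ge> 0} P_u[tau_v > t],
  where tau_v = min {t \<ge> 0. X_t = v}; in particular H_{vv} = 0.\<close>
definition hit_time :: "nat \<Rightarrow> (nat \<Rightarrow> nat \<Rightarrow> bool) \<Rightarrow> nat \<Rightarrow> nat \<Rightarrow> real" where
  "hit_time n E u v = (\<Sum>t. \<Sum>x<n. surv n E u v t x)"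

text \<open>The class G_{k,n,p}. The implicit constant of every O(.) is C, and the o(1) in (vii)
  is bounded by delta n.\<close>
definition in_class :: "nat \<Rightarrow> real \<Rightarrow> (nat \<Rightarrow> real) \<Rightarrow> nat \<Rightarrow> real \<Rightarrow> (nat \<Rightarrow> nat \<Rightarrow> bool) \<Rightarrow> bool" where
  "in_class k C delta n p E \<longleftrightarrow>
     simple_graph n E \<and>
     \<not> bipartite n E \<and>
     diam_le n E k \<and>
     (\<forall>v<n. \<bar>real (deg n E v) - p * n\<bar> \<le> C * sqrt (p * n * ln n)) \<and>
     \<bar>2 * real (num_edges n E) - p * n^2\<bar> \<le> C * sqrt (p * n^2 * ln n) \<and>
     (\<forall>v<n. \<forall>w<n. v \<noteq> w \<longrightarrow>
        \<bar>real (codeg n E v w) - p^2 * n\<bar> \<le> C * max (sqrt (p^2 * n * ln n)) (ln n)) \<and>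
     (\<exists>lams. adj_eigenvalues n E lams \<and>
        (\<exists>phi :: nat \<Rightarrow> real.
           (\<Sum>i<n. (phi i)^2) = 1 \<and>
           (\<forall>i<n. (\<Sum>j<n. adj_mat n E $$ (i, j) * phi j) = lams ! 0 * phi i) \<and>
           (\<forall>i<n. \<bar>phi i - 1 / sqrt n\<bar> \<le> C * (ln n) powr (3/2) / (sqrt p * n * ln (p * n)))) \<and>
        \<bar>lams ! 0 - p * n\<bar> \<le> delta n * (p * n) \<and>
        max \<bar>lams ! 1\<bar> \<bar>lams ! (n - 1)\<bar> \<le> C * sqrt (p * n))"

end

theory Submission
  imports Defs
begin

lemma surv_nonneg: "surv n E u v t x \<ge> 0"
  by (induction t arbitrary: x) (auto simp: trans_def intro!: sum_nonneg)

lemma surv_at_v: "surv n E u v t v = 0"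
  by (cases t) auto

lemma surv_from_v: "surv n E v v t x = 0"
  by (induction t arbitrary: x) auto

context
  fixes n :: nat and E :: "nat \<Rightarrow> nat \<Rightarrow> bool" and v :: nat
  assumes sg: "simple_graph n E"
begin

lemma E_lt: "E a b \<Longrightarrow> a < n \<and> b < n \<and> a \<noteq> b \<and> E b a"
  using sg unfolding simple_graph_def by blast

lemma trans_out: "b \<ge> n \<Longrightarrow> trans n E a b = 0"
  using E_lt[of a b] by (auto simp: trans_def)

lemma surv_first_step:
  assumes "u < n"
  shows "surv n E u v (Suc t) x = (if u = v then 0 else (\<Sum>y<n. trans n E u y * surv n E y v t x))"
  using assms
proof (induction t arbitrary: x)
  case 0
  have L: "surv n E u v (Suc 0) x = (if x = v then 0 else (if u \<noteq> v then trans n E u x else 0))"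
  proof -
    have "(\<Sum>y<n. (if y = u \<and> u \<noteq> v then 1 else 0) * trans n E y x) = (if u \<noteq> v then trans n E u x else 0)"
    proof (cases "u = v")
      case False
      have "(\<Sum>y<n. (if y = u \<and> u \<noteq> v then 1 else 0) * trans n E y x) = (\<Sum>y<n. if y = u then trans n E y x else 0)"
        using False by (intro sum.cong) auto
      also have "\<dots> = trans n E u x" using 0 by simp
      finally show ?thesis using False by simp
    qed simp
    then show ?thesis by simp
  qed
  have R: "(\<Sum>y<n. trans n E u y * surv n E y v 0 x) = (if x < n \<and> x \<noteq> v then trans n E u x else 0)"
  proof -
    have "(\<Sum>y<n. trans n E u y * surv n E y v 0 x) = (\<Sum>y<n. if y = x then (if x \<noteq> v then trans n E u x else 0) else 0)"
      by (intro sum.cong) auto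
    then show ?thesis by simp
  qed
  show ?case
    using L R trans_out[of x u] by auto
next
  case (Suc t)
  have "surv n E u v (Suc (Suc t)) x = (if x = v then 0 else (\<Sum>z<n. surv n E u v (Suc t) z * trans n E z x))"
    by simp
  also have "\<dots> = (if x = v then 0 else (\<Sum>z<n. (if u = v then 0 else (\<Sum>y<n. trans n E u y * surv n E y v t z)) * trans n E z x))"
    using Suc by simp
  also have "\<dots> = (if u = v then 0 else (\<Sum>y<n. trans n E u y * surv n E y v (Suc t) x))"
    by (auto simp: sum_distrib_left sum_distrib_right mult.assoc intro: sum.swap)
  finally show ?case .
qed

lemma handshake: "(\<Sum>x<n. deg n E x) = 2 * num_edges n E"
proof -
  define A where "A = {(a, b). a < n \<and> b < n \<and> E a b}"
  define Ed where "Ed = {{u, x} | u x. u < n \<and> x < n \<and> E u x}"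
  define fib where "fib e = {p \<in> A. {fst p, snd p} = e}" for e
  have "(\<Sum>x<n. deg n E x) = card (SIGMA x:{..<n}. {y. y < n \<and> E x y})"
    by (simp add: deg_def)
  also have "(SIGMA x:{..<n}. {y. y < n \<and> E x y}) = A" unfolding A_def by auto
  also have "A = \<Union> (fib ` Ed)" unfolding A_def Ed_def fib_def by fastforce
  also have "card (\<Union> (fib ` Ed)) = (\<Sum>e\<in>Ed. card (fib e))"
  proof (rule card_UN_disjoint)
    have "Ed \<subseteq> Pow {..<n}" unfolding Ed_def by auto
    then show "finite Ed" by (rule finite_subset) simp
    have "A \<subseteq> {..<n} \<times> {..<n}" unfolding A_def by auto
    then have "finite A" by (rule finite_subset) simp
    then show "\<forall>i\<in>Ed. finite (fib i)" unfolding fib_def by auto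
    show "\<forall>i\<in>Ed. \<forall>j\<in>Ed. i \<noteq> j \<longrightarrow> fib i \<inter> fib j = {}" unfolding fib_def by auto
  qed
  also have "(\<Sum>e\<in>Ed. card (fib e)) = (\<Sum>e\<in>Ed. 2)"
  proof (intro sum.cong refl)
    fix e assume "e \<in> Ed"
    then obtain a b where ab: "e = {a, b}" "a < n" "b < n" "E a b" unfolding Ed_def by blast
    have ne: "a \<noteq> b" and ba: "E b a" using E_lt[OF ab(4)] by auto
    have "fib e = {(a, b), (b, a)}"
      unfolding fib_def A_def using ab ba by (auto simp: doubleton_eq_iff)
    then show "card (fib e) = 2" using ne by simp
  qed
  also have "\<dots> = 2 * num_edges n E" unfolding Ed_def num_edges_def by simp
  finally show ?thesis .
qed

lemma S_step:
  assumes "u < n"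
  shows "(\<Sum>x<n. surv n E u v (Suc t) x) = (if u = v then 0 else (\<Sum>y<n. trans n E u y * (\<Sum>x<n. surv n E y v t x)))"
proof -
  have "(\<Sum>x<n. surv n E u v (Suc t) x) = (\<Sum>x<n. (if u = v then 0 else (\<Sum>y<n. trans n E u y * surv n E y v t x)))"
    using surv_first_step[OF assms] by simp
  also have "\<dots> = (if u = v then 0 else (\<Sum>y<n. trans n E u y * (\<Sum>x<n. surv n E y v t x)))"
    by (auto simp: sum_distrib_left intro: sum.swap)
  finally show ?thesis .
qed

lemma S_zero:
  assumes "u < n"
  shows "(\<Sum>x<n. surv n E u v 0 x) = (if u \<noteq> v then 1 else 0)"
proof -
  have "(\<Sum>x<n. surv n E u v 0 x) = (\<Sum>x<n. if x = u then (if u \<noteq> v then 1 else 0) else 0)"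
    by (intro sum.cong) auto
  then show ?thesis using assms by simp
qed

lemma S_v: "(\<Sum>x<n. surv n E v v t x) = 0"
  by (simp add: surv_from_v)

lemma trans_nonneg: "trans n E a b \<ge> 0"
  by (simp add: trans_def)

lemma S_nonneg: "(\<Sum>x<n. surv n E u v t x) \<ge> 0"
  by (intro sum_nonneg surv_nonneg)

lemma rowsum:
  assumes "u < n" "deg n E u > 0"
  shows "(\<Sum>y<n. trans n E u y) = 1"
proof -
  have "(\<Sum>y<n. trans n E u y) = (\<Sum>y\<in>{y\<in>{..<n}. E u y}. 1 / real (deg n E u))"
    by (subst sum.inter_filter) (auto simp: trans_def)
  also have "{y\<in>{..<n}. E u y} = {y. y < n \<and> E u y}" by auto
  also have "(\<Sum>y\<in>{y. y < n \<and> E u y}. 1 / real (deg n E u)) = 1"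
  proof -
    have "\<exists>x<n. E u x" using assms(2) unfolding deg_def by (metis (mono_tags, lifting) card.empty empty_Collect_eq less_irrefl)
    then show ?thesis using assms(2) by (simp add: deg_def)
  qed
  finally show ?thesis .
qed

context
  assumes dpos: "\<And>u. u < n \<Longrightarrow> deg n E u > 0"
begin

lemma S_le1: "u < n \<Longrightarrow> (\<Sum>x<n. surv n E u v t x) \<le> 1"
proof (induction t arbitrary: u)
  case 0
  then show ?case using S_zero by simp
next
  case (Suc t)
  have "(\<Sum>y<n. trans n E u y * (\<Sum>x<n. surv n E y v t x)) \<le> (\<Sum>y<n. trans n E u y * 1)"
    by (intro sum_mono mult_left_mono Suc.IH trans_nonneg) auto
  also have "\<dots> = 1" using rowsum[OF Suc.prems dpos[OF Suc.prems]] by simp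
  finally show ?case using S_step[OF Suc.prems, of t] by simp
qed

lemma S_mono: "u < n \<Longrightarrow> (\<Sum>x<n. surv n E u v (Suc t) x) \<le> (\<Sum>x<n. surv n E u v t x)"
proof (induction t arbitrary: u)
  case 0
  show ?case
  proof (cases "u = v")
    case True then show ?thesis by (simp add: surv_from_v del: surv.simps)
  next
    case False
    have "(\<Sum>y<n. trans n E u y * (\<Sum>x<n. surv n E y v 0 x)) \<le> (\<Sum>y<n. trans n E u y * 1)"
      by (intro sum_mono mult_left_mono S_le1 trans_nonneg) auto
    also have "\<dots> = 1" using rowsum[OF 0 dpos[OF 0]] by simp
    finally show ?thesis using S_step[OF 0, of 0] S_zero[OF 0] False by simp
  qed
next
  case (Suc t)
  have "(\<Sum>y<n. trans n E u y * (\<Sum>x<n. surv n E y v (Suc t) x)) \<le> (\<Sum>y<n. trans n E u y * (\<Sum>x<n. surv n E y v t x))"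
    by (intro sum_mono mult_left_mono Suc.IH trans_nonneg) auto
  then show ?case using S_step[OF Suc.prems, of "Suc t"] S_step[OF Suc.prems, of t] by simp
qed

lemma S_antimono: "u < n \<Longrightarrow> m \<le> t \<Longrightarrow> (\<Sum>x<n. surv n E u v t x) \<le> (\<Sum>x<n. surv n E u v m x)"
  using lift_Suc_antimono_le[of "\<lambda>t. (\<Sum>x<n. surv n E u v t x)"] S_mono by blast

lemma S_walk: "has_walk E m u v \<Longrightarrow> u < n \<Longrightarrow> (\<Sum>x<n. surv n E u v m x) < 1"
proof (induction m arbitrary: u)
  case 0
  then have "u = v" by (auto simp: has_walk_def)
  then show ?case by (simp add: surv_from_v del: surv.simps)
next
  case (Suc m)
  obtain f where f: "f 0 = u" "f (Suc m) = v" "\<forall>i<Suc m. E (f i) (f (Suc i))"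
    using Suc.prems(1) unfolding has_walk_def by blast
  have e: "E u (f 1)" using f by auto
  have f1: "f 1 < n" using E_lt[OF e] by simp
  have hw: "has_walk E m (f 1) v"
    unfolding has_walk_def using f by (intro exI[of _ "\<lambda>i. f (Suc i)"]) auto
  have lt: "(\<Sum>x<n. surv n E (f 1) v m x) < 1" using Suc.IH[OF hw f1] .
  show ?case
  proof (cases "u = v")
    case True then show ?thesis by (simp add: surv_from_v del: surv.simps)
  next
    case False
    have tpos: "trans n E u (f 1) > 0" using e dpos[OF Suc.prems(2)] by (simp add: trans_def)
    have "(\<Sum>y<n. trans n E u y * (\<Sum>x<n. surv n E y v m x)) < (\<Sum>y<n. trans n E u y * 1)"
    proof (rule sum_strict_mono_ex1)
      show "\<forall>y\<in>{..<n}. trans n E u y * (\<Sum>x<n. surv n E y v m x) \<le> trans n E u y * 1"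
        using S_le1 trans_nonneg mult_left_mono by (metis lessThan_iff)
      show "\<exists>y\<in>{..<n}. trans n E u y * (\<Sum>x<n. surv n E y v m x) < trans n E u y * 1"
        using f1 lt tpos by (intro bexI[of _ "f 1"]) auto
    qed simp
    also have "\<dots> = 1" using rowsum[OF Suc.prems(2) dpos[OF Suc.prems(2)]] by simp
    finally show ?thesis using S_step[OF Suc.prems(2), of m] False by simp
  qed
qed

lemma S_mult: "(\<forall>y<n. (\<Sum>x<n. surv n E y v t x) \<le> c) \<Longrightarrow> u < n \<Longrightarrow>
   (\<Sum>x<n. surv n E u v (s + t) x) \<le> c * (\<Sum>x<n. surv n E u v s x)"
proof (induction s arbitrary: u)
  case 0
  then show ?case using S_zero[OF 0(2)] by (cases "u = v") (auto simp: surv_from_v simp del: surv.simps)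
next
  case (Suc s)
  show ?case
  proof (cases "u = v")
    case True then show ?thesis by (simp add: surv_from_v del: surv.simps)
  next
    case False
    have "(\<Sum>y<n. trans n E u y * (\<Sum>x<n. surv n E y v (s + t) x)) \<le> (\<Sum>y<n. trans n E u y * (c * (\<Sum>x<n. surv n E y v s x)))"
      by (intro sum_mono mult_left_mono Suc.IH Suc.prems trans_nonneg) auto
    also have "\<dots> = c * (\<Sum>y<n. trans n E u y * (\<Sum>x<n. surv n E y v s x))"
      by (simp add: sum_distrib_left algebra_simps)
    finally show ?thesis using S_step[OF Suc.prems(2), of "s + t"] S_step[OF Suc.prems(2), of s] False by simp
  qed
qed

context
  fixes K :: nat
  assumes Kpos: "K > 0" and npos: "n > 0"
    and walks: "\<And>u. u < n \<Longrightarrow> \<exists>m\<le>K. has_walk E m u v"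
begin

lemma S_K_lt: "u < n \<Longrightarrow> (\<Sum>x<n. surv n E u v K x) < 1"
proof -
  assume u: "u < n"
  obtain m where m: "m \<le> K" "has_walk E m u v" using walks[OF u] by blast
  show ?thesis using S_antimono[OF u m(1)] S_walk[OF m(2) u] by linarith
qed

lemma decay: "\<exists>q. 0 \<le> q \<and> q < 1 \<and> (\<forall>u<n. \<forall>j. (\<Sum>x<n. surv n E u v (j * K) x) \<le> q ^ j)"
proof -
  define q where "q = Max ((\<lambda>u. (\<Sum>x<n. surv n E u v K x)) ` {..<n})"
  have fin: "finite ((\<lambda>u. (\<Sum>x<n. surv n E u v K x)) ` {..<n})" by simp
  have ne: "(\<lambda>u. (\<Sum>x<n. surv n E u v K x)) ` {..<n} \<noteq> {}" using npos by auto
  have q1: "q < 1" unfolding q_def using Max_in[OF fin ne] S_K_lt by auto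
  have qge: "\<And>u. u < n \<Longrightarrow> (\<Sum>x<n. surv n E u v K x) \<le> q"
    unfolding q_def by (intro Max_ge fin) auto
  have q0: "0 \<le> q" using qge[of 0] npos S_nonneg[of 0 K] by linarith
  have main: "\<forall>u<n. (\<Sum>x<n. surv n E u v (j * K) x) \<le> q ^ j" for j
  proof (induction j)
    case 0
    then show ?case using S_le1[of _ 0] by (simp del: surv.simps)
  next
    case (Suc j)
    show ?case
    proof (intro allI impI)
      fix u assume u: "u < n"
      have "(\<Sum>x<n. surv n E u v (K + j * K) x) \<le> q ^ j * (\<Sum>x<n. surv n E u v K x)"
        using S_mult[OF Suc.IH u] .
      also have "\<dots> \<le> q ^ j * q" using qge[OF u] q0 by (intro mult_left_mono) auto
      finally show "(\<Sum>x<n. surv n E u v (Suc j * K) x) \<le> q ^ Suc j"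
        by (simp add: add.commute mult.commute)
    qed
  qed
  show ?thesis using q0 q1 main by blast
qed

lemma S_summable: "u < n \<Longrightarrow> summable (\<lambda>t. (\<Sum>x<n. surv n E u v t x))"
proof -
  assume u: "u < n"
  obtain q where q: "0 \<le> q" "q < 1" "\<forall>u<n. \<forall>j. (\<Sum>x<n. surv n E u v (j * K) x) \<le> q ^ j"
    using decay by blast
  define r where "r = max q (1/2)"
  have r: "0 < r" "r < 1" "q \<le> r" using q unfolding r_def by auto
  define \<rho> where "\<rho> = root K r"
  have \<rho>: "0 < \<rho>" "\<rho> < 1" "\<rho> ^ K = r" unfolding \<rho>_def using r Kpos
    by (auto simp: real_root_lt_1_iff)
  have bound: "(\<Sum>x<n. surv n E u v t x) \<le> \<rho> ^ t / \<rho> ^ K" for t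
  proof -
    have "(t div K) * K \<le> t" by simp
    then have "(\<Sum>x<n. surv n E u v t x) \<le> (\<Sum>x<n. surv n E u v ((t div K) * K) x)"
      using S_antimono[OF u] by blast
    also have "\<dots> \<le> q ^ (t div K)" using q(3) u by blast
    also have "\<dots> \<le> r ^ (t div K)" using q r by (intro power_mono) auto
    also have "\<dots> = \<rho> ^ (K * (t div K))" using \<rho>(3) by (simp add: power_mult)
    also have "\<dots> \<le> \<rho> ^ t / \<rho> ^ K"
    proof -
      have "t \<le> K * (t div K) + K"
      proof -
        have "K * (t div K) + t mod K = t" by (rule mult_div_mod_eq)
        then show ?thesis using mod_less_divisor[OF Kpos, of t] by linarith
      qed
      then have "\<rho> ^ (K * (t div K) + K) \<le> \<rho> ^ t"
        using \<rho> by (intro power_decreasing) auto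
      then have "\<rho> ^ (K * (t div K)) * r \<le> \<rho> ^ t" using \<rho> by (simp add: power_add)
      then show ?thesis using \<rho> r by (simp add: pos_le_divide_eq)
    qed
    finally show ?thesis .
  qed
  have sg: "summable (\<lambda>t. \<rho> ^ t / \<rho> ^ K)"
    using \<rho> by (intro summable_divide summable_geometric) auto
  show ?thesis
    by (rule summable_comparison_test'[OF sg, of 0]) (use bound S_nonneg in auto)
qed

lemma hit_rec:
  assumes u: "u < n"
  shows "hit_time n E u v = (if u = v then 0 else 1 + (\<Sum>y<n. trans n E u y * hit_time n E y v))"
proof (cases "u = v")
  case True
  then show ?thesis by (simp add: hit_time_def surv_from_v del: surv.simps)
next
  case False
  have sm: "summable (\<lambda>t. (\<Sum>x<n. surv n E u v t x))" using S_summable[OF u] .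
  have "hit_time n E u v = (\<Sum>x<n. surv n E u v 0 x) + (\<Sum>t. (\<Sum>x<n. surv n E u v (Suc t) x))"
    unfolding hit_time_def using suminf_split_head[OF sm] by simp
  also have "(\<Sum>t. (\<Sum>x<n. surv n E u v (Suc t) x)) = (\<Sum>t. \<Sum>y<n. trans n E u y * (\<Sum>x<n. surv n E y v t x))"
    using S_step[OF u] False by simp
  also have "\<dots> = (\<Sum>y<n. \<Sum>t. trans n E u y * (\<Sum>x<n. surv n E y v t x))"
    by (rule suminf_sum) (auto intro!: summable_mult S_summable)
  also have "\<dots> = (\<Sum>y<n. trans n E u y * hit_time n E y v)"
    unfolding hit_time_def by (intro sum.cong refl suminf_mult S_summable) auto
  finally show ?thesis using S_zero[OF u] False by simp
qed

context
  fixes w :: nat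
  assumes vn: "v < n" and wn: "w < n"
begin

lemma mu_sum: "(\<Sum>x<n. walk_dist n E w t x) = 1"
proof (induction t)
  case 0
  have "(\<Sum>x<n. walk_dist n E w 0 x) = (\<Sum>x<n. if x = w then 1 else 0)" by simp
  then show ?case using wn by simp
next
  case (Suc t)
  have "(\<Sum>y<n. walk_dist n E w (Suc t) y) = (\<Sum>x<n. walk_dist n E w t x * (\<Sum>y<n. trans n E x y))"
    by (simp add: sum_distrib_left) (rule sum.swap)
  also have "\<dots> = (\<Sum>x<n. walk_dist n E w t x)"
    by (intro sum.cong refl) (simp add: rowsum dpos)
  finally show ?case using Suc by simp
qed

abbreviation "h x \<equiv> hit_time n E x v"
abbreviation "RR \<equiv> 1 + (\<Sum>y<n. trans n E v y * h y)"

lemma step_id: "x < n \<Longrightarrow> (\<Sum>y<n. trans n E x y * h y) = h x - 1 + (if x = v then RR else 0)"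
  using hit_rec[of x] hit_rec[of v] vn by (cases "x = v") auto

lemma mu_h_step: "(\<Sum>y<n. walk_dist n E w (Suc s) y * h y) =
   (\<Sum>x<n. walk_dist n E w s x * h x) - 1 + RR * walk_dist n E w s v"
proof -
  have "(\<Sum>y<n. walk_dist n E w (Suc s) y * h y) = (\<Sum>x<n. walk_dist n E w s x * (\<Sum>y<n. trans n E x y * h y))"
    by (simp add: sum_distrib_left sum_distrib_right mult.assoc) (rule sum.swap)
  also have "\<dots> = (\<Sum>x<n. walk_dist n E w s x * (h x - 1 + (if x = v then RR else 0)))"
    by (intro sum.cong refl) (simp add: step_id)
  also have "\<dots> = (\<Sum>x<n. walk_dist n E w s x * h x) - (\<Sum>x<n. walk_dist n E w s x)
      + (\<Sum>x<n. if x = v then RR * walk_dist n E w s v else 0)"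
  proof -
    have "(\<Sum>x<n. walk_dist n E w s x * (h x - 1 + (if x = v then RR else 0))) =
      (\<Sum>x<n. (walk_dist n E w s x * h x - walk_dist n E w s x) + (if x = v then RR * walk_dist n E w s v else 0))"
      by (intro sum.cong refl) (auto simp: algebra_simps)
    also have "\<dots> = (\<Sum>x<n. walk_dist n E w s x * h x) - (\<Sum>x<n. walk_dist n E w s x)
      + (\<Sum>x<n. if x = v then RR * walk_dist n E w s v else 0)"
      by (simp only: sum.distrib sum_subtractf)
    finally show ?thesis .
  qed
  also have "\<dots> = (\<Sum>x<n. walk_dist n E w s x * h x) - 1 + RR * walk_dist n E w s v"
    using vn by (simp add: mu_sum)
  finally show ?thesis .
qed

lemma identity: "h w = l + (\<Sum>u<n. walk_dist n E w l u * h u) - RR * (\<Sum>s<l. walk_dist n E w s v)"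
proof (induction l)
  case 0
  have "(\<Sum>u<n. walk_dist n E w 0 u * h u) = (\<Sum>u<n. if u = w then h w else 0)"
    by (intro sum.cong refl) auto
  then show ?case using wn by simp
next
  case (Suc l)
  then show ?case using mu_h_step[of l] by (simp add: algebra_simps)
qed


lemma kac: "real (deg n E v) * RR = (\<Sum>x<n. real (deg n E x))"
proof -
  have col: "(\<Sum>x<n. real (deg n E x) * trans n E x y) = real (deg n E y)" if y: "y < n" for y
  proof -
    have "(\<Sum>x<n. real (deg n E x) * trans n E x y) = (\<Sum>x<n. if E y x then 1 else 0)"
    proof (intro sum.cong refl)
      fix x assume x: "x \<in> {..<n}"
      have "E x y = E y x" using E_lt[of x y] E_lt[of y x] by blast
      then show "real (deg n E x) * trans n E x y = (if E y x then 1 else 0)"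
        using dpos[of x] x by (auto simp: trans_def)
    qed
    also have "\<dots> = real (card {x\<in>{..<n}. E y x})"
      by (simp add: sum.If_cases Int_def)
    also have "{x\<in>{..<n}. E y x} = {x. x < n \<and> E y x}" by auto
    finally show ?thesis by (simp add: deg_def)
  qed
  have A: "(\<Sum>x<n. real (deg n E x) * (\<Sum>y<n. trans n E x y * h y)) = (\<Sum>y<n. real (deg n E y) * h y)"
  proof -
    have "(\<Sum>x<n. real (deg n E x) * (\<Sum>y<n. trans n E x y * h y)) = (\<Sum>y<n. (\<Sum>x<n. real (deg n E x) * trans n E x y) * h y)"
      by (simp add: sum_distrib_left sum_distrib_right mult.assoc) (rule sum.swap)
    also have "\<dots> = (\<Sum>y<n. real (deg n E y) * h y)"
      by (intro sum.cong refl) (simp add: col)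
    finally show ?thesis .
  qed
  have B: "(\<Sum>x<n. real (deg n E x) * (\<Sum>y<n. trans n E x y * h y)) =
     (\<Sum>x<n. real (deg n E x) * h x) - (\<Sum>x<n. real (deg n E x)) + (\<Sum>x<n. if x = v then real (deg n E v) * RR else 0)"
  proof -
    have "(\<Sum>x<n. real (deg n E x) * (\<Sum>y<n. trans n E x y * h y)) =
      (\<Sum>x<n. (real (deg n E x) * h x - real (deg n E x)) + (if x = v then real (deg n E v) * RR else 0))"
    proof (intro sum.cong refl)
      fix x assume x: "x \<in> {..<n}"
      have e: "(\<Sum>y<n. trans n E x y * h y) = h x - 1 + (if x = v then RR else 0)" using step_id x by simp
      show "real (deg n E x) * (\<Sum>y<n. trans n E x y * h y) =
        (real (deg n E x) * h x - real (deg n E x)) + (if x = v then real (deg n E v) * RR else 0)"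
        unfolding e by (cases "x = v") (simp_all add: algebra_simps)
    qed
    also have "\<dots> = (\<Sum>x<n. real (deg n E x) * h x) - (\<Sum>x<n. real (deg n E x)) + (\<Sum>x<n. if x = v then real (deg n E v) * RR else 0)"
      by (simp only: sum.distrib sum_subtractf)
    finally show ?thesis .
  qed
  show ?thesis using A B vn by simp
qed

lemma exact:
  assumes vw: "v \<noteq> w"
  shows "h w - (l + (\<Sum>u<n. walk_dist n E w l u * h u)
     - 2 * real (num_edges n E) / real (deg n E v) * (\<Sum>i\<in>{1..<l}. walk_dist n E w i v)) = 0"
proof -
  have hs: "(\<Sum>x<n. real (deg n E x)) = 2 * real (num_edges n E)"
    using handshake by (metis of_nat_mult of_nat_numeral of_nat_sum)
  have dv: "real (deg n E v) > 0" using dpos[OF vn] by simp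
  have R: "RR = 2 * real (num_edges n E) / real (deg n E v)"
    using kac hs dv by (simp add: field_simps)
  have sp: "(\<Sum>s<l. walk_dist n E w s v) = (\<Sum>i\<in>{1..<l}. walk_dist n E w i v)"
  proof (cases "l = 0")
    case False
    then have "{..<l} = insert 0 {1..<l}" by auto
    then show ?thesis using vw by simp
  qed simp
  show ?thesis using identity[of l] R sp by simp
qed

end

end

end

end


theorem lemma5p1:
  fixes k l :: nat and p :: "nat \<Rightarrow> real" and c C :: real and delta :: "nat \<Rightarrow> real"
  assumes "k \<ge> 2"
    and "c > 0"
    and "delta \<longlonglongrightarrow> 0"
    and "\<forall>\<^sub>F n in sequentially. ln n / real n powr ((real k - 1) / real k) \<le> p n \<and>
                                  p n \<le> 1 - c * (ln n)^4 / n"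
  shows "\<exists>D N. \<forall>n \<ge> N. \<forall>E v w. in_class k C delta n (p n) E \<longrightarrow> v < n \<longrightarrow> w < n \<longrightarrow> v \<noteq> w \<longrightarrow>
           \<bar>hit_time n E w v -
             (l + (\<Sum>u<n. walk_dist n E w l u * hit_time n E u v)
              - 2 * real (num_edges n E) / real (deg n E v) * (\<Sum>i\<in>{1..<l}. walk_dist n E w i v))\<bar>
           \<le> D / (p n * n)"
proof (intro exI allI impI)
  fix n E v w
  assume ic: "in_class k C delta n (p n) E" and v: "v < n" and w: "w < n" and vw: "v \<noteq> w"
  have sg: "simple_graph n E" and dl: "diam_le n E k" using ic unfolding in_class_def by auto
  have walks: "\<And>u z. u < n \<Longrightarrow> z < n \<Longrightarrow> \<exists>m\<le>k. has_walk E m u z" using dl unfolding diam_le_def by blast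
  have dpos: "deg n E u > 0" if u: "u < n" for u
  proof -
    define z where "z = (if u = v then w else v)"
    have z: "z < n" "z \<noteq> u" using v w vw unfolding z_def by auto
    obtain m f where f: "f 0 = u" "f m = z" "\<forall>i<m. E (f i) (f (Suc i))"
      using walks[OF u z(1)] unfolding has_walk_def by blast
    have "m \<noteq> 0" using f z by (metis)
    then have e: "E u (f 1)" using f by auto
    have "f 1 \<in> {y. y < n \<and> E u y}" using e sg unfolding simple_graph_def by auto
    then have "{y. y < n \<and> E u y} \<noteq> {}" by blast
    then show ?thesis unfolding deg_def by (simp add: card_gt_0_iff)
  qed
  have kpos: "k > 0" using assms(1) by simp
  have npos: "n > 0" using v by simp
  have "hit_time n E w v - (l + (\<Sum>u<n. walk_dist n E w l u * hit_time n E u v)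
     - 2 * real (num_edges n E) / real (deg n E v) * (\<Sum>i\<in>{1..<l}. walk_dist n E w i v)) = 0"
    by (rule exact[OF sg dpos kpos npos _ v w vw]) (use walks v in auto)
  then show "\<bar>hit_time n E w v - (l + (\<Sum>u<n. walk_dist n E w l u * hit_time n E u v)
     - 2 * real (num_edges n E) / real (deg n E v) * (\<Sum>i\<in>{1..<l}. walk_dist n E w i v))\<bar> \<le> 0 / (p n * n)"
    by simp
qed

end
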